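(* Assume Schanuel's conjecture $(S)$. Then there exist transcendental positive real numbers $x,y,s,t$ with $s\neq t$ such that $x^{y}\neq y^{x}$, $s^{t}=t^{s}$, and the three numbers $x^{y}$, $y^{x}$, $s^{t}$ are integers. (For instance one may take $x\in(2,3)$ with $x^{2^{1/x}}=3$ and $y=2^{1/x}$, so that $x^y=3$, $y^x=2$, and $s<t$ positive reals with $s^t=t^s=17$.)
   Context: Schanuel's conjecture $(S)$: if $\alpha_1,\dots,\alpha_n\in\mathbb{C}$ are linearly independent over $\mathbb{Q}$, then the transcendence degree of $\mathbb{Q}(\alpha_1,\dots,\alpha_n,e^{\alpha_1},\dots,e^{\alpha_n})$ over $\mathbb{Q}$ is at least $n$. Powers of positive reals are the usual real powers. *)

theory Defs
  imports "HOL-Analysis.Analysis" "HOL-Computational_Algebra.Polynomial"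
begin

text \<open>The family z 0, ..., z (k-1) of complex numbers is algebraically independent over the
  rationals: every polynomial in k variables with rational coefficients (given as a finite sum of
  coefficients times monomials, the exponent vectors being supported on the first k indices)
  vanishing at (z 0, ..., z (k-1)) has all coefficients zero.\<close>
definition alg_indep_Q :: "nat \<Rightarrow> (nat \<Rightarrow> complex) \<Rightarrow> bool" where
  "alg_indep_Q k z \<longleftrightarrow>
     (\<forall>(c :: (nat \<Rightarrow> nat) \<Rightarrow> complex) S.
        finite S \<and> S \<subseteq> {e. \<forall>i\<ge>k. e i = 0} \<and> (\<forall>e\<in>S. c e \<in> \<rat>) \<and>
        (\<Sum>e\<in>S. c e * (\<Prod>i<k. z i ^ e i)) = 0 \<longrightarrow> (\<forall>e\<in>S. c e = 0))"

definition trdeg_Q_ge :: "nat \<Rightarrow> complex set \<Rightarrow> bool" where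
  "trdeg_Q_ge n A \<longleftrightarrow> (\<exists>z. inj_on z {..<n} \<and> z ` {..<n} \<subseteq> A \<and> alg_indep_Q n z)"

definition lin_indep_Q :: "nat \<Rightarrow> (nat \<Rightarrow> complex) \<Rightarrow> bool" where
  "lin_indep_Q n a \<longleftrightarrow>
     (\<forall>q :: nat \<Rightarrow> complex. (\<forall>i<n. q i \<in> \<rat>) \<and> (\<Sum>i<n. q i * a i) = 0 \<longrightarrow> (\<forall>i<n. q i = 0))"

definition schanuel :: bool where
  "schanuel \<longleftrightarrow>
     (\<forall>n (a :: nat \<Rightarrow> complex). lin_indep_Q n a \<longrightarrow>
        trdeg_Q_ge n (a ` {..<n} \<union> (\<lambda>i. exp (a i)) ` {..<n}))"

end

theory Submission
  imports Defs "HOL-Computational_Algebra.Primes"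
begin


lemma pw_aux: "(x::'a::comm_monoid_mult) ^ (j * a + b * c) = (x ^ a) ^ j * (x ^ c) ^ b"
  by (simp add: power_add flip: power_mult) (simp add: mult.commute)

lemma dep_main:
  fixes z :: "nat \<Rightarrow> complex" and e e' :: "nat \<Rightarrow> nat"
  assumes ind: "alg_indep_Q n z" and e: "\<forall>i\<ge>n. e i = 0" and e': "\<forall>i\<ge>n. e' i = 0"
    and ne: "e \<noteq> e'" and alg: "algebraic \<beta>"
    and rel: "(\<Prod>i<n. z i ^ e i) = \<beta> * (\<Prod>i<n. z i ^ e' i)"
  shows False
proof -
  obtain p where pQ: "\<forall>i. coeff p i \<in> \<rat>" and pnz: "p \<noteq> 0" and root: "poly p \<beta> = 0"
    using alg unfolding algebraic_altdef by blast
  define d where "d = degree p"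
  define E where "E = (\<lambda>j i. j * e i + (d - j) * e' i)"
  define M where "M = (\<Prod>i<n. z i ^ e i)"
  define M' where "M' = (\<Prod>i<n. z i ^ e' i)"
  have injE: "inj_on E {..d}"
  proof (rule inj_onI)
    fix j1 j2 assume j1: "j1 \<in> {..d}" and j2: "j2 \<in> {..d}" and eq: "E j1 = E j2"
    from ne obtain i where i: "e i \<noteq> e' i" by auto
    from eq have "E j1 i = E j2 i" by simp
    hence "int (E j1 i) = int (E j2 i)" by simp
    hence "int j1 * int (e i) + (int d - int j1) * int (e' i) = int j2 * int (e i) + (int d - int j2) * int (e' i)"
      using j1 j2 unfolding E_def by (simp only: of_nat_add of_nat_mult of_nat_diff) simp
    hence "(int j1 - int j2) * (int (e i) - int (e' i)) = 0" by (simp add: algebra_simps)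
    thus "j1 = j2" using i by simp
  qed
  have Mj: "(\<Prod>i<n. z i ^ E j i) = M ^ j * M' ^ (d - j)" for j
    unfolding M_def M'_def E_def prod_power_distrib prod.distrib[symmetric]
    by (rule prod.cong) (auto simp: pw_aux)
  define c where "c = (\<lambda>f. coeff p (inv_into {..d} E f))"
  define S where "S = E ` {..d}"
  have "(\<Sum>f\<in>S. c f * (\<Prod>i<n. z i ^ f i)) = (\<Sum>j\<le>d. c (E j) * (\<Prod>i<n. z i ^ E j i))"
    unfolding S_def by (rule sum.reindex[OF injE, unfolded comp_def])
  also have "\<dots> = (\<Sum>j\<le>d. coeff p j * \<beta> ^ j * M' ^ d)"
  proof (rule sum.cong)
    fix j assume j: "j \<in> {..d}"
    have "c (E j) = coeff p j" unfolding c_def using inv_into_f_f[OF injE j] by simp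
    moreover have "M ^ j * M' ^ (d - j) = \<beta> ^ j * M' ^ d"
      using j rel unfolding M_def[symmetric] M'_def[symmetric]
      by (simp add: power_mult_distrib mult.assoc power_add[symmetric])
    ultimately show "c (E j) * (\<Prod>i<n. z i ^ E j i) = coeff p j * \<beta> ^ j * M' ^ d"
      using Mj by (simp add: mult.assoc)
  qed simp
  also have "\<dots> = poly p \<beta> * M' ^ d"
    unfolding poly_altdef d_def sum_distrib_right by simp
  also have "\<dots> = 0" using root by simp
  finally have sum0: "(\<Sum>f\<in>S. c f * (\<Prod>i<n. z i ^ f i)) = 0" .
  have "finite S" unfolding S_def by simp
  moreover have "S \<subseteq> {f. \<forall>i\<ge>n. f i = 0}" unfolding S_def E_def using e e' by auto
  moreover have "\<forall>f\<in>S. c f \<in> \<rat>" unfolding c_def using pQ by auto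
  ultimately have "\<forall>f\<in>S. c f = 0" using ind sum0 unfolding alg_indep_Q_def by blast
  hence "coeff p j = 0" for j
  proof (cases "j \<le> d")
    case True
    assume "\<forall>f\<in>S. c f = 0"
    hence "c (E j) = 0" unfolding S_def using True by auto
    thus ?thesis unfolding c_def using inv_into_f_f[OF injE, of j] True by simp
  next
    case False thus ?thesis unfolding d_def by (simp add: coeff_eq_0)
  qed
  hence "p = 0" by (simp add: poly_eq_iff)
  thus False using pnz by simp
qed

definition dl :: "nat \<Rightarrow> nat \<Rightarrow> nat" where "dl i = (\<lambda>k. if k = i then 1 else 0)"

lemma prod_dl: "i < n \<Longrightarrow> (\<Prod>k<n. (z k::complex) ^ dl i k) = z i"
proof -
  assume i: "i < n"
  have "(\<Prod>k<n. z k ^ dl i k) = (\<Prod>k<n. if k = i then z k else 1)"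
    by (rule prod.cong) (auto simp: dl_def)
  also have "\<dots> = z i" using i by (simp add: prod.delta)
  finally show ?thesis .
qed

lemma dep1:
  assumes "alg_indep_Q n z" "i < n" "algebraic (z i)"
  shows False
proof (rule dep_main[OF assms(1), of "dl i" "\<lambda>_. 0" "z i"])
  show "\<forall>k\<ge>n. dl i k = 0" using assms(2) by (auto simp: dl_def)
  show "dl i \<noteq> (\<lambda>_. 0)" by (auto simp: dl_def fun_eq_iff)
  show "(\<Prod>k<n. z k ^ dl i k) = z i * (\<Prod>k<n. z k ^ 0)" using prod_dl[OF assms(2)] by simp
qed (use assms in auto)

lemma dep2:
  assumes "alg_indep_Q n z" "i < n" "j < n" "i \<noteq> j" "algebraic \<beta>" "z i = \<beta> * z j"
  shows False
proof (rule dep_main[OF assms(1), of "dl i" "dl j" "\<beta>"])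
  show "\<forall>k\<ge>n. dl i k = 0" "\<forall>k\<ge>n. dl j k = 0" using assms(2,3) by (auto simp: dl_def)
  show "dl i \<noteq> dl j" using assms(4) by (auto simp: dl_def fun_eq_iff)
  show "(\<Prod>k<n. z k ^ dl i k) = \<beta> * (\<Prod>k<n. z k ^ dl j k)"
    using prod_dl[OF assms(2)] prod_dl[OF assms(3)] assms(6) by simp
qed (use assms in auto)

lemma dep3:
  assumes "alg_indep_Q n z" "i < n" "j < n" "k < n" "i \<noteq> j" "algebraic \<beta>" "z i * z j = \<beta> * z k"
  shows False
proof (rule dep_main[OF assms(1), of "\<lambda>m. dl i m + dl j m" "dl k" "\<beta>"])
  show "\<forall>m\<ge>n. dl i m + dl j m = 0" "\<forall>m\<ge>n. dl k m = 0" using assms(2,3,4) by (auto simp: dl_def)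
  show "(\<lambda>m. dl i m + dl j m) \<noteq> dl k"
  proof
    assume "(\<lambda>m. dl i m + dl j m) = dl k"
    hence a1: "dl i i + dl j i = dl k i" and a2: "dl i j + dl j j = dl k j"
      using fun_cong by fastforce+
    show False
    proof (cases "k = i")
      case True thus False using a2 assms(5) by (simp add: dl_def)
    next
      case False thus False using a1 assms(5) by (simp add: dl_def)
    qed
  qed
  have "(\<Prod>m<n. z m ^ (dl i m + dl j m)) = (\<Prod>m<n. z m ^ dl i m) * (\<Prod>m<n. z m ^ dl j m)"
    unfolding power_add prod.distrib by (rule refl)
  thus "(\<Prod>m<n. z m ^ (dl i m + dl j m)) = \<beta> * (\<Prod>m<n. z m ^ dl k m)"
    using prod_dl[OF assms(2)] prod_dl[OF assms(3)] prod_dl[OF assms(4)] assms(7) by simp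
qed (use assms in auto)

lemma alg_affine:
  fixes x :: "'a::field_char_0"
  assumes x: "algebraic x" and r: "r \<in> \<rat>" and s: "s \<in> \<rat>"
  shows "algebraic (r * x + s)"
proof (cases "r = 0")
  case True thus ?thesis using s by (simp add: rat_imp_algebraic)
next
  case False
  obtain p where pQ: "\<forall>i. coeff p i \<in> \<rat>" and pnz: "p \<noteq> 0" and root: "poly p x = 0"
    using x unfolding algebraic_altdef by blast
  define q where "q = pcompose p [:- s / r, 1 / r:]"
  have "poly q (r * x + s) = 0" unfolding q_def poly_pcompose using False root
    by (simp add: field_simps)
  moreover have "q \<noteq> 0" unfolding q_def using pnz False by (simp add: pcompose_eq_0_iff)
  moreover have "coeff q i \<in> \<rat>" for i
    unfolding q_def
    by (rule coeff_pcompose_semiring_closed) (use pQ r s in \<open>auto simp: coeff_pCons split: nat.splits\<close>)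
  ultimately show ?thesis unfolding algebraic_altdef by blast
qed

lemma alg_scale: "algebraic (x::'a::field_char_0) \<Longrightarrow> r \<in> \<rat> \<Longrightarrow> algebraic (r * x)"
  using alg_affine[of x r 0] by simp

lemma cRats_real: "(q::complex) \<in> \<rat> \<Longrightarrow> \<exists>r::real. r \<in> \<rat> \<and> q = of_real r"
proof -
  assume "q \<in> \<rat>"
  then obtain a b where "q = of_int a / of_int b" by (rule Rats_cases')
  thus ?thesis by (intro exI[of _ "of_int a / of_int b"]) auto
qed

lemma lt2: "{..<2::nat} = {0,1}" by auto
lemma lt3: "{..<3::nat} = {0,1,2}" by auto

lemma schan2:
  assumes S: schanuel
    and li: "\<forall>r0 r1::real. r0 \<in> \<rat> \<longrightarrow> r1 \<in> \<rat> \<longrightarrow> r0 * A0 + r1 * A1 = 0 \<longrightarrow> r0 = 0 \<and> r1 = 0"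
  shows "\<exists>z. inj_on z {..<2} \<and> z ` {..<2} \<subseteq> {of_real A0, of_real A1, of_real (exp A0), of_real (exp A1)} \<and> alg_indep_Q 2 z"
proof -
  define a :: "nat \<Rightarrow> complex" where "a = (\<lambda>i. if i = 0 then of_real A0 else of_real A1)"
  have "lin_indep_Q 2 a" unfolding lin_indep_Q_def
  proof (rule allI, rule impI)
    fix q :: "nat \<Rightarrow> complex"
    assume h: "(\<forall>i<2. q i \<in> \<rat>) \<and> (\<Sum>i<2. q i * a i) = 0"
    have "q 0 \<in> \<rat>" using h by simp
    then obtain r0 where r0: "r0 \<in> \<rat>" "q 0 = of_real r0" using cRats_real by blast
    have "q 1 \<in> \<rat>" using h by simp
    then obtain r1 where r1: "r1 \<in> \<rat>" "q 1 = of_real r1" using cRats_real by blast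
    have "of_real (r0 * A0 + r1 * A1) = (0::complex)" using h r0 r1 by (simp add: lt2 a_def)
    hence "r0 * A0 + r1 * A1 = 0" by (simp only: of_real_eq_0_iff)
    hence "r0 = 0 \<and> r1 = 0" using li r0 r1 by blast
    moreover have "\<And>i::nat. i < 2 \<Longrightarrow> i = 0 \<or> i = 1" by auto
    ultimately show "\<forall>i<2. q i = 0" using r0 r1 by fastforce
  qed
  hence "trdeg_Q_ge 2 (a ` {..<2} \<union> (\<lambda>i. exp (a i)) ` {..<2})" using S unfolding schanuel_def by blast
  moreover have "a ` {..<2} \<union> (\<lambda>i. exp (a i)) ` {..<2} = {of_real A0, of_real A1, of_real (exp A0), of_real (exp A1)}"
    by (auto simp: lt2 a_def exp_of_real)
  ultimately show ?thesis unfolding trdeg_Q_ge_def by auto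
qed

lemma schan3:
  assumes S: schanuel
    and li: "\<forall>r0 r1 r2::real. r0 \<in> \<rat> \<longrightarrow> r1 \<in> \<rat> \<longrightarrow> r2 \<in> \<rat> \<longrightarrow> r0 * A0 + r1 * A1 + r2 * A2 = 0 \<longrightarrow> r0 = 0 \<and> r1 = 0 \<and> r2 = 0"
  shows "\<exists>z. inj_on z {..<3} \<and> z ` {..<3} \<subseteq> {of_real A0, of_real A1, of_real A2, of_real (exp A0), of_real (exp A1), of_real (exp A2)} \<and> alg_indep_Q 3 z"
proof -
  define a :: "nat \<Rightarrow> complex" where "a = (\<lambda>i. if i = 0 then of_real A0 else if i = 1 then of_real A1 else of_real A2)"
  have "lin_indep_Q 3 a" unfolding lin_indep_Q_def
  proof (rule allI, rule impI)
    fix q :: "nat \<Rightarrow> complex"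
    assume h: "(\<forall>i<3. q i \<in> \<rat>) \<and> (\<Sum>i<3. q i * a i) = 0"
    have "q 0 \<in> \<rat>" using h by simp
    then obtain r0 where r0: "r0 \<in> \<rat>" "q 0 = of_real r0" using cRats_real by blast
    have "q 1 \<in> \<rat>" using h by simp
    then obtain r1 where r1: "r1 \<in> \<rat>" "q 1 = of_real r1" using cRats_real by blast
    have "q 2 \<in> \<rat>" using h by simp
    then obtain r2 where r2: "r2 \<in> \<rat>" "q 2 = of_real r2" using cRats_real by blast
    have "of_real (r0 * A0 + r1 * A1 + r2 * A2) = (0::complex)" using h r0 r1 r2 by (simp add: lt3 a_def add.assoc)
    hence "r0 * A0 + r1 * A1 + r2 * A2 = 0" by (simp only: of_real_eq_0_iff)
    hence "r0 = 0 \<and> r1 = 0 \<and> r2 = 0" using li r0 r1 r2 by blast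
    moreover have "\<And>i::nat. i < 3 \<Longrightarrow> i = 0 \<or> i = 1 \<or> i = 2" by auto
    ultimately show "\<forall>i<3. q i = 0" using r0 r1 r2 by fastforce
  qed
  hence "trdeg_Q_ge 3 (a ` {..<3} \<union> (\<lambda>i. exp (a i)) ` {..<3})" using S unfolding schanuel_def by blast
  moreover have "a ` {..<3} \<union> (\<lambda>i. exp (a i)) ` {..<3} = {of_real A0, of_real A1, of_real A2, of_real (exp A0), of_real (exp A1), of_real (exp A2)}"
    by (auto simp: lt3 a_def exp_of_real)
  ultimately show ?thesis unfolding trdeg_Q_ge_def by auto
qed

lemma mob:
  fixes u :: real
  assumes u: "algebraic u" and q: "\<alpha> \<in> \<rat>" "\<gamma> \<in> \<rat>" "\<delta> \<in> \<rat>" and nz: "\<gamma> * u + \<delta> \<noteq> 0"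
  shows "algebraic (\<alpha> * u / (\<gamma> * u + \<delta>))"
proof (cases "\<gamma> = 0")
  case True
  hence "\<alpha> * u / (\<gamma> * u + \<delta>) = (\<alpha> / \<delta>) * u" by simp
  thus ?thesis using alg_scale[OF u, of "\<alpha> / \<delta>"] q True by simp
next
  case False
  have a1: "algebraic (\<gamma> * u + \<delta>)" by (rule alg_affine[OF u q(2,3)])
  hence a2: "algebraic (inverse (\<gamma> * u + \<delta>))" by blast
  have "algebraic ((- (\<alpha> * \<delta> / \<gamma>)) * inverse (\<gamma> * u + \<delta>) + \<alpha> / \<gamma>)"
    by (rule alg_affine[OF a2]) (use q in auto)
  moreover have "(- (\<alpha> * \<delta> / \<gamma>)) * inverse (\<gamma> * u + \<delta>) + \<alpha> / \<gamma> = \<alpha> * u / (\<gamma> * u + \<delta>)"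
    using False nz by (simp add: divide_simps) (simp add: algebra_simps)
  ultimately show ?thesis by simp
qed

lemma C2:
  fixes ell w L :: real and c :: nat
  assumes S: schanuel and ell: "ell \<noteq> 0" and w: "algebraic w" "w \<notin> \<rat>"
    and rel: "w * ell = c * L" and c: "c > 0"
    and ae: "algebraic (exp ell)" and aL: "algebraic (exp L)"
  shows False
proof -
  have li: "\<forall>r0 r1::real. r0 \<in> \<rat> \<longrightarrow> r1 \<in> \<rat> \<longrightarrow> r0 * ell + r1 * L = 0 \<longrightarrow> r0 = 0 \<and> r1 = 0"
  proof (intro allI impI)
    fix r0 r1 :: real assume r: "r0 \<in> \<rat>" "r1 \<in> \<rat>" and h: "r0 * ell + r1 * L = 0"
    have L: "L = w * ell / c" using rel c by (simp add: field_simps)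
    have "ell * (r0 + r1 * w / c) = 0" using h unfolding L by (simp add: field_simps)
    hence e1: "r0 + r1 * w / c = 0" using ell by simp
    have "r1 = 0"
    proof (rule ccontr)
      assume "r1 \<noteq> 0"
      hence "w = - (c * r0) / r1" using e1 c by (simp add: field_simps)
      hence "w \<in> \<rat>" using r by (simp add: Rats_divide Rats_mult Rats_minus_iff)
      thus False using w by simp
    qed
    thus "r0 = 0 \<and> r1 = 0" using e1 by simp
  qed
  obtain z where inj: "inj_on z {..<2}" and sub: "z ` {..<2} \<subseteq> {of_real ell, of_real L, of_real (exp ell), of_real (exp L)}"
    and ind: "alg_indep_Q 2 z" using schan2[OF S li] by blast
  have beta: "algebraic (of_real (w / c) :: complex)"
    unfolding algebraic_of_real_iff using alg_scale[OF w(1), of "1 / c"] by (simp add: field_simps)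
  have relc: "(of_real L :: complex) = of_real (w / c) * of_real ell"
  proof -
    have "L = (w / c) * ell" using rel c by (simp add: field_simps)
    thus ?thesis by (metis of_real_mult)
  qed
  have z01: "z 0 \<noteq> z 1" using inj by (auto dest: inj_onD)
  show False
  proof (cases "algebraic (z 0) \<or> algebraic (z 1)")
    case True thus False using dep1[OF ind, of 0] dep1[OF ind, of 1] by auto
  next
    case False
    have "z 0 \<in> {of_real ell, of_real L}" "z 1 \<in> {of_real ell, of_real L}"
      using sub False ae aL by (auto simp: lt2 algebraic_of_real_iff)
    hence "(z 0 = of_real L \<and> z 1 = of_real ell) \<or> (z 1 = of_real L \<and> z 0 = of_real ell)" using z01 by auto
    thus False
    proof
      assume "z 0 = of_real L \<and> z 1 = of_real ell"
      thus False using dep2[OF ind, of 0 1, OF _ _ _ beta] relc by auto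
    next
      assume "z 1 = of_real L \<and> z 0 = of_real ell"
      thus False using dep2[OF ind, of 1 0, OF _ _ _ beta] relc by auto
    qed
  qed
qed

lemma pick3:
  assumes inj: "inj_on z {..<3::nat}" and m: "\<forall>i<3. z i \<in> {A, B, C}"
  shows "\<exists>i<3. \<exists>j<3. \<exists>k<3. z i = A \<and> z j = B \<and> z k = C \<and> i \<noteq> j \<and> A \<noteq> B \<and> A \<noteq> C \<and> B \<noteq> C"
proof -
  have d: "z 0 \<noteq> z 1" "z 0 \<noteq> z 2" "z 1 \<noteq> z 2" using inj by (auto dest: inj_onD)
  have m': "z 0 \<in> {A,B,C}" "z 1 \<in> {A,B,C}" "z 2 \<in> {A,B,C}" using m by auto
  have im: "z ` {..<3} = {z 0, z 1, z 2}" by (auto simp: lt3)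
  have "A \<in> {z 0, z 1, z 2}" "B \<in> {z 0, z 1, z 2}" "C \<in> {z 0, z 1, z 2}" "A \<noteq> B" "A \<noteq> C" "B \<noteq> C"
    using d m' by auto
  then obtain i j k where "i < 3" "j < 3" "k < 3" "z i = A" "z j = B" "z k = C"
    unfolding im[symmetric] by blast
  thus ?thesis using \<open>A \<noteq> B\<close> \<open>A \<noteq> C\<close> \<open>B \<noteq> C\<close> by blast
qed

lemma C3:
  fixes L u v :: real and a b :: nat
  assumes S: schanuel and L: "L > 0" and u: "u > 0" and v: "v > 0"
    and au: "algebraic u" and uQ: "u \<notin> \<rat>" and av: "\<not> algebraic v"
    and r1: "v * ln u = a * L" and r2: "u * ln v = b * L" and a: "a > 0" and b: "b > 0"
    and aL: "algebraic (exp L)"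
  shows False
proof -
  have li: "\<forall>r0 r1 r2::real. r0 \<in> \<rat> \<longrightarrow> r1 \<in> \<rat> \<longrightarrow> r2 \<in> \<rat> \<longrightarrow> r0 * L + r1 * ln u + r2 * ln v = 0 \<longrightarrow> r0 = 0 \<and> r1 = 0 \<and> r2 = 0"
  proof (intro allI impI)
    fix q0 q1 q2 :: real assume q: "q0 \<in> \<rat>" "q1 \<in> \<rat>" "q2 \<in> \<rat>" and h: "q0 * L + q1 * ln u + q2 * ln v = 0"
    have "u * v * (q0 * L + q1 * ln u + q2 * ln v) = q0 * L * u * v + q1 * u * (v * ln u) + q2 * v * (u * ln v)"
      by (simp add: algebra_simps)
    also have "\<dots> = L * (q0 * u * v + q1 * a * u + q2 * b * v)" unfolding r1 r2 by (simp add: algebra_simps)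
    finally have "L * (q0 * u * v + q1 * a * u + q2 * b * v) = 0" using h by simp
    hence e: "q0 * u * v + q1 * a * u + q2 * b * v = 0" using L by simp
    have e2: "q0 * u + q2 * b = 0"
    proof (rule ccontr)
      assume nz: "q0 * u + q2 * b \<noteq> 0"
      have "v = (- q1 * a) * u / (q0 * u + q2 * b)" using e nz by (simp add: field_simps)
      moreover have "algebraic ((- q1 * a) * u / (q0 * u + q2 * b))"
        by (rule mob[OF au]) (use q nz in auto)
      ultimately show False using av by simp
    qed
    have "q0 * u * v + q1 * a * u + q2 * b * v = v * (q0 * u + q2 * b) + q1 * a * u"
      by (simp add: algebra_simps)
    hence "q1 * a * u = 0" using e e2 by simp
    hence q1z: "q1 = 0" using a u by simp
    have "q0 = 0"
    proof (rule ccontr)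
      assume "q0 \<noteq> 0"
      hence "u = - (q2 * b) / q0" using e2 by (simp add: field_simps)
      hence "u \<in> \<rat>" using q by (simp add: Rats_divide Rats_mult Rats_minus_iff)
      thus False using uQ by simp
    qed
    thus "q0 = 0 \<and> q1 = 0 \<and> q2 = 0" using e2 q1z b by simp
  qed
  obtain z where inj: "inj_on z {..<3}"
    and sub: "z ` {..<3} \<subseteq> {of_real L, of_real (ln u), of_real (ln v), of_real (exp L), of_real (exp (ln u)), of_real (exp (ln v))}"
    and ind: "alg_indep_Q 3 z" using schan3[OF S li] by blast
  define cL where "cL = (of_real L :: complex)"
  define cu where "cu = (of_real (ln u) :: complex)"
  define cv where "cv = (of_real (ln v) :: complex)"
  define V where "V = (of_real v :: complex)"
  have Lv: "L \<noteq> ln v"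
  proof
    assume "L = ln v"
    hence "u = b" using r2 L by simp
    thus False using uQ by simp
  qed
  have R1: "V * cu = of_nat a * cL" unfolding V_def cu_def cL_def using r1 by (metis of_real_mult of_real_of_nat_eq)
  have R2: "cL = of_real (u / b) * cv" unfolding cv_def cL_def
  proof -
    have "L = (u / b) * ln v" using r2 b by (simp add: field_simps)
    thus "(of_real L::complex) = of_real (u / b) * of_real (ln v)" by (metis of_real_mult)
  qed
  have R3: "V * cu = of_real (a * u / b) * cv" unfolding R1 R2 by (simp add: field_simps)
  have b2: "algebraic (of_real (u / b) :: complex)" unfolding algebraic_of_real_iff
    using alg_scale[OF au, of "1 / b"] by (simp add: field_simps)
  have b3: "algebraic (of_real (a * u / b) :: complex)" unfolding algebraic_of_real_iff
    using alg_scale[OF au, of "a / b"] by (simp add: field_simps)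
  have cLv: "cL \<noteq> cv" unfolding cL_def cv_def using Lv by simp
  show False
  proof (cases "\<exists>i<3. algebraic (z i)")
    case True thus False using dep1[OF ind] by blast
  next
    case False
    have mem: "\<forall>i<3. z i \<in> {cL, cu, cv, V}"
    proof (intro allI impI)
      fix i :: nat assume i: "i < 3"
      hence "z i \<in> {of_real L, of_real (ln u), of_real (ln v), of_real (exp L), of_real (exp (ln u)), of_real (exp (ln v))}"
        using sub by auto
      moreover have "\<not> algebraic (z i)" using False i by auto
      ultimately show "z i \<in> {cL, cu, cv, V}" using u v aL au
        unfolding cL_def cu_def cv_def V_def by (auto simp: algebraic_of_real_iff)
    qed
    show False
    proof (cases "cv \<in> z ` {..<3}")
      case False
      hence "\<forall>i<3. z i \<in> {V, cu, cL}" using mem by auto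
      then obtain i j k where "i < 3" "j < 3" "k < 3" "z i = V" "z j = cu" "z k = cL" "i \<noteq> j"
        using pick3[OF inj] by blast
      thus False using dep3[OF ind, of i j k "of_nat a"] R1 by simp
    next
      case True
      then obtain j where j: "j < 3" "z j = cv" by auto
      show False
      proof (cases "cL \<in> z ` {..<3}")
        case True
        then obtain i where i: "i < 3" "z i = cL" by auto
        hence "i \<noteq> j" using j cLv by auto
        thus False using dep2[OF ind i(1) j(1) _ b2] i j R2 by simp
      next
        case False
        hence "\<forall>i<3. z i \<in> {V, cu, cv}" using mem by auto
        then obtain i j k where "i < 3" "j < 3" "k < 3" "z i = V" "z j = cu" "z k = cv" "i \<noteq> j"
          using pick3[OF inj] by blast
        thus False using dep3[OF ind, of i j k, OF _ _ _ _ b3] R3 by simp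
      qed
    qed
  qed
qed



lemma RL:
  fixes u v :: real and p :: nat
  assumes p: "prime p" and uQ: "u \<in> \<rat>" and vQ: "v \<in> \<rat>" and u: "u > 0" and v: "v > 0"
    and h: "v * ln u = ln p"
  shows "v \<le> 1"
proof -
  obtain A B :: int where B: "B > 0" and cAB: "coprime A B" and uAB: "u = of_int A / of_int B"
    using uQ by (rule Rats_cases')
  obtain C D :: int where D: "D > 0" and cCD: "coprime C D" and vCD: "v = of_int C / of_int D"
    using vQ by (rule Rats_cases')
  have A: "A > 0" using u B uAB by (simp add: zero_less_divide_iff)
  have C: "C > 0" using v D vCD by (simp add: zero_less_divide_iff)
  have p0: "real p > 0" using p prime_gt_0_nat by simp
  have "real_of_int C * ln u = real_of_int D * ln p" using h vCD D by (simp add: field_simps)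
  hence "ln (u ^ nat C) = ln (real p ^ nat D)" using C D by (simp add: ln_realpow)
  hence "u ^ nat C = real p ^ nat D" using u p0 by (subst ln_inj_iff[symmetric]) auto
  hence "(real_of_int A) ^ nat C = real p ^ nat D * (real_of_int B) ^ nat C"
    using uAB B by (simp add: power_divide field_simps)
  hence "real_of_int (A ^ nat C) = real_of_int (int p ^ nat D * B ^ nat C)" by simp
  hence eq: "A ^ nat C = int p ^ nat D * B ^ nat C" by (simp only: of_int_eq_iff)
  have "B ^ nat C dvd A ^ nat C" unfolding eq by simp
  hence "B dvd A" using C by simp
  hence "\<bar>B\<bar> = 1" using coprime_common_divisor_int[OF cAB _ dvd_refl] by blast
  hence "B = 1" using B by simp
  hence eq2: "A ^ nat C = int p ^ nat D" using eq by simp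
  have pr: "prime_elem (int p)" using p by (simp add: prime_imp_prime_elem)
  have "multiplicity (int p) (A ^ nat C) = nat C * multiplicity (int p) A"
    by (rule prime_elem_multiplicity_power_distrib) (use pr A in auto)
  moreover have "multiplicity (int p) (int p ^ nat D) = nat D" using pr by simp
  ultimately have "nat D = nat C * multiplicity (int p) A" using eq2 by simp
  hence "nat C dvd nat D" by simp
  hence "C dvd D" using C D by (metis int_nat_eq of_nat_dvd_iff order_less_imp_le)
  hence "\<bar>C\<bar> = 1" using coprime_common_divisor_int[OF cCD dvd_refl] by blast
  hence "C = 1" using C by simp
  thus "v \<le> 1" using vCD D by simp
qed



lemma TR:
  fixes u v :: real and a b p :: nat
  assumes S: schanuel and p: "prime p" and u: "u > 0" and v: "v > 0"
    and r1: "v * ln u = a * ln p" and r2: "u * ln v = b * ln p"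
    and a: "a > 0" and b: "b > 0" and ab: "a = 1 \<or> b = 1"
  shows "\<not> algebraic u"
proof
  assume au: "algebraic u"
  have p1: "real p > 1" using p prime_gt_1_nat by simp
  define L where "L = ln (real p)"
  have L: "L > 0" unfolding L_def using p1 by simp
  have aL: "algebraic (exp L)" unfolding L_def using p1 by simp
  have r1': "v * ln u = a * L" and r2': "u * ln v = b * L" using r1 r2 unfolding L_def by auto
  have lu: "ln u > 0"
  proof -
    have "v * ln u > 0" using r1' a L by simp
    thus ?thesis using v by (simp add: zero_less_mult_iff)
  qed
  have lv: "ln v > 0"
  proof -
    have "u * ln v > 0" using r2' b L by simp
    thus ?thesis using u by (simp add: zero_less_mult_iff)
  qed
  show False
  proof (cases "algebraic v")
    case av: True
    show False
    proof (cases "u \<in> \<rat> \<and> v \<in> \<rat>")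
      case True
      show False using ab
      proof
        assume "a = 1"
        hence "v \<le> 1" using RL[OF p _ _ u v] True r1 by simp
        thus False using lv v by simp
      next
        assume "b = 1"
        hence "u \<le> 1" using RL[OF p _ _ v u] True r2 by simp
        thus False using lu u by simp
      qed
    next
      case False
      show False
      proof (cases "v \<in> \<rat>")
        case False
        show False by (rule C2[OF S _ av False r1' a]) (use lu u aL au in auto)
      next
        case True
        hence "u \<notin> \<rat>" using \<open>\<not> (u \<in> \<rat> \<and> v \<in> \<rat>)\<close> by simp
        show False by (rule C2[OF S _ au \<open>u \<notin> \<rat>\<close> r2' b]) (use lv v aL av in auto)
      qed
    qed
  next
    case av: False
    show False
    proof (cases "u \<in> \<rat>")
      case False
      show False by (rule C3[OF S L u v au False av r1' r2' a b aL])
    next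
      case True
      hence "b / u \<in> \<rat>" by (simp add: Rats_divide)
      then obtain C D :: int where D: "D > 0" and CD: "b / u = of_int C / of_int D"
        by (rule Rats_cases') blast
      have C: "C > 0"
      proof -
        have "b / u > 0" using b u by simp
        thus ?thesis using D CD by (simp add: zero_less_divide_iff)
      qed
      have lnv: "ln v = (b / u) * L" using r2' u by (simp add: field_simps)
      have "v ^ nat D = exp (real (nat D) * ln v)" using v by (simp add: exp_of_nat_mult)
      also have "real (nat D) * ln v = real (nat C) * L"
        unfolding lnv CD using C D by simp
      also have "exp (real (nat C) * L) = real p ^ nat C"
        unfolding L_def using p1 by (simp add: exp_of_nat_mult)
      finally have "v ^ nat D = real p ^ nat C" .
      hence "root (nat D) (real p ^ nat C) = v" using D v by (intro real_root_pos_unique) auto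
      moreover have "algebraic (root (nat D) (real p ^ nat C))" by (intro algebraic_nth_root_real) (metis algebraic_of_nat of_nat_power)
      ultimately show False using av by simp
    qed
  qed
qed



lemma xy_exist: "\<exists>x y::real. x > 0 \<and> y > 0 \<and> y * ln x = real 1 * ln (real 2) \<and> x * ln y = real 2 * ln (real 2)"
proof -
  define F where "F = (\<lambda>x::real. exp (2 * ln 2 / x) * ln x)"
  have "\<forall>x. 1 \<le> x \<and> x \<le> 2 \<longrightarrow> isCont F x" unfolding F_def by (auto intro!: continuous_intros)
  moreover have "F 1 \<le> ln 2" unfolding F_def by simp
  moreover have "ln 2 \<le> F 2" unfolding F_def by simp
  ultimately obtain x where x: "1 \<le> x" "x \<le> 2" "F x = ln 2" using IVT[of F 1 "ln 2" 2] by auto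
  have "x \<noteq> 1" using x unfolding F_def by auto
  hence x0: "x > 0" using x by simp
  define y where "y = exp (2 * ln 2 / x)"
  have "y * ln x = ln 2" using x unfolding F_def y_def by simp
  moreover have "x * ln y = 2 * ln 2" unfolding y_def using x0 by simp
  ultimately show ?thesis using x0 by (intro exI[of _ x] exI[of _ y]) (auto simp: y_def)
qed

lemma st_exist: "\<exists>s t::real. s > 0 \<and> t > 0 \<and> s \<noteq> t \<and> t * ln s = real 1 * ln (real 19) \<and> s * ln t = real 1 * ln (real 19)"
proof -
  define G where "G = (\<lambda>w::real. w * exp (ln w / (w - 1)) * (ln w / (w - 1)))"
  have "\<forall>x. 2 \<le> x \<and> x \<le> 9 \<longrightarrow> isCont G x" unfolding G_def by (auto intro!: continuous_intros)
  moreover have "G 2 \<le> ln 19"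
  proof -
    have "G 2 = 4 * ln 2" unfolding G_def by simp
    also have "\<dots> = ln (2 ^ 4)" using ln_realpow[of 2 4] by simp
    also have "\<dots> \<le> ln 19" by simp
    finally show ?thesis .
  qed
  moreover have "ln 19 \<le> G 9"
  proof -
    have l9: "ln (9::real) = 2 * ln 3" using ln_realpow[of 3 2] by simp
    have G9: "G 9 = 9 * exp (ln 3 / 4) * (ln 3 / 4)" unfolding G_def l9 by simp
    have "(11/9::real) ^ 4 \<le> 3" by (simp add: power_divide)
    hence "ln ((11/9::real) ^ 4) \<le> ln 3" by simp
    hence "ln (11/9::real) \<le> ln 3 / 4" by (simp add: ln_realpow)
    hence "exp (ln (11/9::real)) \<le> exp (ln 3 / 4)" by (simp only: exp_le_cancel_iff)
    hence e: "11/9 \<le> exp (ln (3::real) / 4)" by (metis exp_ln zero_less_divide_iff zero_less_numeral)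
    have l3: "ln (3::real) > 0" by simp
    have "ln (19::real) * 4 = ln (19 ^ 4)" using ln_realpow[of "19::real" 4] by (simp only: mult.commute)
    also have "\<dots> \<le> ln (3 ^ 11)" by simp
    also have "\<dots> = 11 * ln 3" using ln_realpow[of "3::real" 11] by (simp only:)
    finally have "ln (19::real) \<le> 9 * (11/9) * (ln 3 / 4)" by simp
    also have "\<dots> \<le> 9 * exp (ln 3 / 4) * (ln 3 / 4)"
      using e l3 by (intro mult_right_mono mult_left_mono) auto
    finally show ?thesis unfolding G9 .
  qed
  ultimately obtain w where w: "2 \<le> w" "w \<le> 9" "G w = ln 19" using IVT[of G 2 "ln 19" 9] by auto
  define s where "s = exp (ln w / (w - 1))"
  define t where "t = w * s"
  have s0: "s > 0" unfolding s_def by simp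
  have t0: "t > 0" unfolding t_def using s0 w by simp
  have st: "s \<noteq> t" unfolding t_def using s0 w by simp
  have lns: "ln s = ln w / (w - 1)" unfolding s_def by simp
  have lnt: "ln t = ln w + ln w / (w - 1)" unfolding t_def using s0 w by (simp add: ln_mult lns)
  have "t * ln s = G w" unfolding G_def t_def lns s_def by simp
  moreover have "s * ln t = G w" unfolding G_def lnt using w by (simp add: s_def field_simps)
  ultimately show ?thesis using s0 t0 st w by (intro exI[of _ s] exI[of _ t]) auto
qed

theorem mainTheorem2:
  assumes "schanuel"
  shows "\<exists>(x::real) (y::real) (s::real) (t::real).
           x > 0 \<and> y > 0 \<and> s > 0 \<and> t > 0 \<and>
           \<not> algebraic x \<and> \<not> algebraic y \<and> \<not> algebraic s \<and> \<not> algebraic t \<and>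
           s \<noteq> t \<and> x powr y \<noteq> y powr x \<and> s powr t = t powr s \<and>
           x powr y \<in> \<int> \<and> y powr x \<in> \<int> \<and> s powr t \<in> \<int>"
proof -
  obtain x y :: real where x: "x > 0" and y: "y > 0" and r1: "y * ln x = real 1 * ln (real 2)"
    and r2: "x * ln y = real 2 * ln (real 2)" using xy_exist by blast
  obtain s t :: real where s: "s > 0" and t: "t > 0" and st: "s \<noteq> t"
    and q1: "t * ln s = real 1 * ln (real 19)" and q2: "s * ln t = real 1 * ln (real 19)" using st_exist by blast
  have p2: "prime (2::nat)" by simp
  have p19: "prime (19::nat)" unfolding prime_nat_iff' by (auto simp: atLeastLessThan_nat_numeral)
  have "\<not> algebraic x" by (rule TR[OF assms p2 x y r1 r2]) auto
  moreover have "\<not> algebraic y" by (rule TR[OF assms p2 y x r2 r1]) auto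
  moreover have "\<not> algebraic s" by (rule TR[OF assms p19 s t q1 q2]) auto
  moreover have "\<not> algebraic t" by (rule TR[OF assms p19 t s q2 q1]) auto
  moreover have "x powr y = 2" using x r1 by (simp add: powr_def mult.commute)
  moreover have "y powr x = 4"
  proof -
    have "y powr x = exp (2 * ln 2)" using y r2 by (simp add: powr_def mult.commute)
    also have "\<dots> = exp (ln 2 + ln 2)" by simp
    also have "\<dots> = 4" by (simp only: exp_add) simp
    finally show ?thesis .
  qed
  moreover have "s powr t = 19" using s q1 by (simp add: powr_def mult.commute)
  moreover have "t powr s = 19" using t q2 by (simp add: powr_def mult.commute)
  ultimately show ?thesis using x y s t st by (intro exI[of _ x] exI[of _ y] exI[of _ s] exI[of _ t]) auto
qed


end
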